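(* For a positive integer $\tau$ and $p\in[0,1]$, let \[ R_\tau(p) := \min \mathbb{E}\big[\#\{t\in\{0,1,\dots,\tau\} : X_t = 0\} \,\big|\, X_0 = 0\big], \] where the minimum is over all sequences of instructions, $(X_t)$ being the guided random walk following them. Then for any integers $0\le t_1\le t_2$, any $x\in\mathbb{Z}^2$, and any guided random walk $(X_t)$ (any sequence of instructions, any possibly random initial position $X_0$), \[ \mathbb{P}\big(X_t = x \text{ for some } t\in[t_1,t_2]\big) \le \frac{\mathbb{E}\big[\#\{t\in[t_1,t_2+\tau] : X_t = x\}\big]}{R_\tau(p)}. \]
   Context: Integer intervals $[a,b]$ denote $\{a,a+1,\dots,b\}$. A sequence of instructions is an infinite walk $(x_t)_{t\ge 0}$ in $\mathbb{Z}^2$ with $x_{t+1}-x_t\in\{(\pm1,0),(0,\pm1)\}$. The guided random walk with error probability $p$ following it is the process $(X_t)_{t\ge0}$ whose increments are independent (and independent of $X_0$), with $X_{t+1}-X_t = x_{t+1}-x_t$ with probability $1-p$, and $X_{t+1}-X_t$ uniformly distributed on $\{(\pm1,0),(0,\pm1)\}$ with probability $p$. *)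

theory Defs
  imports "HOL-Probability.Probability"
begin

definition unit_steps :: "(int \<times> int) set" where
  "unit_steps = {(1,0), (-1,0), (0,1), (0,-1)}"

definition is_instructions :: "(nat \<Rightarrow> int \<times> int) \<Rightarrow> bool" where
  "is_instructions x \<longleftrightarrow> (\<forall>t. x (Suc t) - x t \<in> unit_steps)"

definition step_pmf :: "real \<Rightarrow> int \<times> int \<Rightarrow> (int \<times> int) pmf" where
  "step_pmf p d = bind_pmf (bernoulli_pmf p)
      (\<lambda>err. if err then pmf_of_set unit_steps else return_pmf d)"

definition guided_walk ::
  "'w measure \<Rightarrow> real \<Rightarrow> (nat \<Rightarrow> int \<times> int) \<Rightarrow> (nat \<Rightarrow> 'w \<Rightarrow> int \<times> int) \<Rightarrow> bool" where
  "guided_walk M p x X \<longleftrightarrow>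
     prob_space M \<and> is_instructions x \<and>
     (\<forall>t. X t \<in> measurable M (count_space UNIV)) \<and>
     prob_space.indep_vars M (\<lambda>_. count_space UNIV)
        (\<lambda>t \<omega>. if t = 0 then X 0 \<omega> else X t \<omega> - X (t - 1) \<omega>) UNIV \<and>
     (\<forall>t. distr M (count_space UNIV) (\<lambda>\<omega>. X (Suc t) \<omega> - X t \<omega>)
            = measure_pmf (step_pmf p (x (Suc t) - x t)))"

primrec path_pmf :: "(nat \<Rightarrow> int \<times> int) \<Rightarrow> real \<Rightarrow> nat \<Rightarrow> (int \<times> int) list pmf" where
  "path_pmf x p 0 = return_pmf [(0,0)]"
| "path_pmf x p (Suc n) = bind_pmf (path_pmf x p n)
     (\<lambda>xs. map_pmf (\<lambda>d. xs @ [last xs + d]) (step_pmf p (x (Suc n) - x n)))"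

definition R :: "nat \<Rightarrow> real \<Rightarrow> real" where
  "R \<tau> p = Inf {measure_pmf.expectation (path_pmf x p \<tau>)
                   (\<lambda>xs. real (card {t \<in> {0..\<tau>}. xs ! t = (0,0)})) | x. is_instructions x}"

end

theory Submission
  imports Defs
begin

lemma pmf_pair_measure:
  fixes A :: "'a::countable pmf" and B :: "'b::countable pmf"
  shows "measure_pmf A \<Otimes>\<^sub>M measure_pmf B = measure_pmf (pair_pmf A B)"
proof (rule measure_eqI_countable[where A=UNIV])
  have "sets (measure_pmf A \<Otimes>\<^sub>M measure_pmf B) = sets (count_space (UNIV::'a set) \<Otimes>\<^sub>M count_space (UNIV::'b set))"
    by (rule sets_pair_measure_cong) auto
  also have "\<dots> = Pow UNIV" by (subst pair_measure_countable) auto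
  finally show "sets (measure_pmf A \<Otimes>\<^sub>M measure_pmf B) = Pow UNIV" .
  show "sets (measure_pmf (pair_pmf A B)) = Pow UNIV" by simp
  show "countable (UNIV :: ('a\<times>'b) set)" by simp
  fix ab :: "'a \<times> 'b"
  obtain a b where ab: "ab = (a,b)" by (cases ab)
  have e1: "{ab} = {a} \<times> {b}" using ab by auto
  have "emeasure (measure_pmf A \<Otimes>\<^sub>M measure_pmf B) ({a} \<times> {b}) = emeasure A {a} * emeasure B {b}"
    by (rule sigma_finite_measure.emeasure_pair_measure_Times[OF measure_pmf.sigma_finite_measure_axioms]) auto
  then have "emeasure (measure_pmf A \<Otimes>\<^sub>M measure_pmf B) {ab} = emeasure A {a} * emeasure B {b}"
    by (simp only: e1)
  also have "\<dots> = emeasure (pair_pmf A B) {ab}"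
    by (simp add: emeasure_pmf_single ab pmf_pair ennreal_mult)
  finally show "emeasure (measure_pmf A \<Otimes>\<^sub>M measure_pmf B) {ab} = emeasure (pair_pmf A B) {ab}" .
qed

lemma sets_PiM_finite_all:
  assumes K: "finite K" and S: "S \<subseteq> space (PiM K (\<lambda>_. count_space (UNIV::'a::countable set)))"
  shows "S \<in> sets (PiM K (\<lambda>_. count_space (UNIV::'a set)))"
proof -
  have sp: "space (PiM K (\<lambda>_. count_space (UNIV::'a set))) = PiE K (\<lambda>_. UNIV)"
    by (simp add: space_PiM)
  have "countable (PiE K (\<lambda>_. (UNIV::'a set)))"
    using K by (intro countable_PiE) auto
  then have cS: "countable S" using S sp by (metis countable_subset)
  have eq: "S = (\<Union>g\<in>S. PiE K (\<lambda>i. {g i}))"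
  proof
    show "S \<subseteq> (\<Union>g\<in>S. PiE K (\<lambda>i. {g i}))"
      using S sp by (auto simp: PiE_iff)
    show "(\<Union>g\<in>S. PiE K (\<lambda>i. {g i})) \<subseteq> S"
    proof
      fix f assume "f \<in> (\<Union>g\<in>S. PiE K (\<lambda>i. {g i}))"
      then obtain g where g: "g \<in> S" "f \<in> PiE K (\<lambda>i. {g i})" by auto
      have "g \<in> PiE K (\<lambda>_. UNIV)" using g S sp by auto
      then have "f = g" using g(2) by (auto simp: PiE_iff extensional_def fun_eq_iff)
      then show "f \<in> S" using g by simp
    qed
  qed
  have "(\<Union>g\<in>S. PiE K (\<lambda>i. {g i})) \<in> sets (PiM K (\<lambda>_. count_space (UNIV::'a set)))"
    using cS K by (intro sets.countable_UN' sets_PiM_I_finite) auto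
  then show ?thesis using eq by simp
qed

lemma measurable_PiM_finite_all:
  assumes K: "finite K"
  shows "(f :: (nat \<Rightarrow> 'a::countable) \<Rightarrow> 'b) \<in> measurable (PiM K (\<lambda>_. count_space (UNIV::'a set))) (count_space UNIV)"
  by (rule measurableI) (auto intro!: sets_PiM_finite_all K)


lemma path_set:
  "xs \<in> set_pmf (path_pmf x p n) \<Longrightarrow> length xs = Suc n \<and> xs ! 0 = (0,0)"
proof (induction n arbitrary: xs)
  case 0 then show ?case by simp
next
  case (Suc n)
  then obtain ys d where "ys \<in> set_pmf (path_pmf x p n)" "xs = ys @ [last ys + d]"
    by auto
  with Suc.IH[of ys] show ?case by (simp add: nth_append)
qed

lemma path_nth:
  assumes "k \<le> n"
  shows "map_pmf (\<lambda>xs. xs ! k) (path_pmf x p n) = map_pmf last (path_pmf x p k)"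
  using assms
proof (induction n)
  case 0
  then show ?case by simp
next
  case (Suc n)
  show ?case
  proof (cases "k = Suc n")
    case True
    then show ?thesis
      by (intro map_pmf_cong) (auto dest!: path_set simp: last_conv_nth nth_append)
  next
    case False
    then have kn: "k \<le> n" using Suc.prems by simp
    have "map_pmf (\<lambda>xs. xs ! k) (path_pmf x p (Suc n)) =
      bind_pmf (path_pmf x p n) (\<lambda>xs. return_pmf (xs ! k))"
      unfolding path_pmf.simps map_bind_pmf
      apply (intro bind_pmf_cong refl)
      apply (simp add: map_pmf_comp)
      apply (subst map_pmf_cong[where g="\<lambda>_. _ ! k"])
        apply (rule refl)
       apply (drule path_set) using kn apply (simp add: nth_append)
      apply (simp add: map_pmf_const)
      done
    also have "\<dots> = map_pmf (\<lambda>xs. xs ! k) (path_pmf x p n)"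
      by (simp add: map_pmf_def)
    finally show ?thesis using Suc.IH[OF kn] by simp
  qed
qed

lemma path_last_Suc:
  "map_pmf last (path_pmf x p (Suc n)) =
   map_pmf (\<lambda>(a, b). a + b) (pair_pmf (map_pmf last (path_pmf x p n)) (step_pmf p (x (Suc n) - x n)))"
  by (simp add: pair_pmf_def map_pmf_def bind_assoc_pmf bind_return_pmf)


lemma expect_count:
  fixes Q :: "(int \<times> int) list pmf"
  assumes "finite S"
  shows "measure_pmf.expectation Q (\<lambda>xs. real (card {t \<in> S. xs ! t = (0,0)}))
       = (\<Sum>t\<in>S. measure_pmf.prob Q {xs. xs ! t = (0,0)})"
proof -
  have eqs: "\<And>xs. real (card {t \<in> S. xs ! t = (0,0)}) = (\<Sum>t\<in>S. indicator {xs. xs ! t = (0,0)} xs)"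
    using assms by (simp add: indicator_def sum.If_cases Int_def)
  have "measure_pmf.expectation Q (\<lambda>xs. real (card {t \<in> S. xs ! t = (0,0)}))
     = measure_pmf.expectation Q (\<lambda>xs. \<Sum>t\<in>S. indicator {xs. xs ! t = (0,0)} xs)"
    by (simp only: eqs)
  also have "\<dots> = (\<Sum>t\<in>S. measure_pmf.expectation Q (indicator {xs. xs ! t = (0,0)}))"
    by (rule Bochner_Integration.integral_sum[where I=S and f="\<lambda>t. (indicator {xs::(int\<times>int) list. xs ! t = (0,0)} :: _ \<Rightarrow> real)"]) (auto intro!: integrable_real_indicator simp: measure_pmf.emeasure_eq_measure)
  finally show ?thesis by simp
qed

locale gw =
  fixes M :: "'w measure" and p :: real and x :: "nat \<Rightarrow> int \<times> int" and X :: "nat \<Rightarrow> 'w \<Rightarrow> int \<times> int"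
  assumes gwalk: "guided_walk M p x X"
begin

sublocale prob_space M using gwalk by (simp add: guided_walk_def)

definition Y :: "nat \<Rightarrow> 'w \<Rightarrow> int \<times> int" where
  "Y t \<omega> = (if t = 0 then X 0 \<omega> else X t \<omega> - X (t - 1) \<omega>)"

lemma Xmeas[measurable]: "X t \<in> measurable M (count_space UNIV)"
  using gwalk by (simp add: guided_walk_def)

lemma indY: "indep_vars (\<lambda>_. count_space UNIV) Y UNIV"
  using gwalk unfolding guided_walk_def Y_def[abs_def] by simp

lemma stepdistr: "distr M (count_space UNIV) (\<lambda>\<omega>. X (Suc t) \<omega> - X t \<omega>) = measure_pmf (step_pmf p (x (Suc t) - x t))"
  using gwalk by (simp add: guided_walk_def)

lemma X_diff: "X (s + k) \<omega> - X s \<omega> = (\<Sum>i\<in>{s<..s+k}. Y i \<omega>)"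
proof (induction k)
  case 0 then show ?case by simp
next
  case (Suc k)
  have "{s<..s + Suc k} = insert (Suc (s+k)) {s<..s+k}" by auto
  then have "(\<Sum>i\<in>{s<..s+Suc k}. Y i \<omega>) = Y (Suc (s+k)) \<omega> + (\<Sum>i\<in>{s<..s+k}. Y i \<omega>)"
    by simp
  have Yeq: "Y (Suc (s+k)) \<omega> = X (Suc (s+k)) \<omega> - X (s+k) \<omega>" by (simp add: Y_def)
  have "X (s + Suc k) \<omega> - X s \<omega> = (X (Suc (s+k)) \<omega> - X (s+k) \<omega>) + (X (s+k) \<omega> - X s \<omega>)" by simp
  also have "\<dots> = Y (Suc (s+k)) \<omega> + (\<Sum>i\<in>{s<..s+k}. Y i \<omega>)" by (simp only: Yeq Suc.IH)
  finally show ?case using \<open>(\<Sum>i\<in>{s<..s+Suc k}. Y i \<omega>) = _\<close> by simp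
qed

lemma X_sum: "X t \<omega> = (\<Sum>i\<in>{..t}. Y i \<omega>)"
proof (induction t)
  case 0 then show ?case by (simp add: Y_def)
next
  case (Suc t)
  then show ?case by (simp add: Y_def)
qed

definition V :: "nat set \<Rightarrow> 'w \<Rightarrow> nat \<Rightarrow> int \<times> int" where
  "V K \<omega> = restrict (\<lambda>i. Y i \<omega>) K"

lemma indep_fun:
  assumes "K \<inter> L = {}" "finite K" "finite L"
  shows "indep_var (count_space UNIV) (\<lambda>\<omega>. g (V K \<omega>)) (count_space UNIV) (\<lambda>\<omega>. h (V L \<omega>))"
proof -
  have "indep_var (count_space UNIV) (g \<circ> V K) (count_space UNIV) (h \<circ> V L)"
    unfolding V_def[abs_def]
    by (rule indep_var_compose[OF indep_var_restrict[OF indY]])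
       (use assms in \<open>auto intro: measurable_PiM_finite_all\<close>)
  then show ?thesis by (simp add: comp_def)
qed

lemma prob_indep:
  assumes "K \<inter> L = {}" "finite K" "finite L"
  shows "prob {\<omega> \<in> space M. P (V K \<omega>) \<and> Q (V L \<omega>)} =
         prob {\<omega> \<in> space M. P (V K \<omega>)} * prob {\<omega> \<in> space M. Q (V L \<omega>)}"
  using prob_indep_random_variable[OF indep_fun[OF assms, of P Q], of "{True}" "{True}"]
  by simp

lemma distr_diff:
  "distr M (count_space UNIV) (\<lambda>\<omega>. X (s + n) \<omega> - X s \<omega>) =
   measure_pmf (map_pmf last (path_pmf (\<lambda>j. x (s + j)) p n))"
proof (induction n)
  case 0
  show ?case
  proof (rule measure_eqI)
    show "sets (distr M (count_space UNIV) (\<lambda>\<omega>. X (s + 0) \<omega> - X s \<omega>)) =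
      sets (measure_pmf (map_pmf last (path_pmf (\<lambda>j. x (s + j)) p 0)))" by simp
    fix A :: "(int \<times> int) set"
    assume "A \<in> sets (distr M (count_space UNIV) (\<lambda>\<omega>. X (s + 0) \<omega> - X s \<omega>))"
    show "emeasure (distr M (count_space UNIV) (\<lambda>\<omega>. X (s + 0) \<omega> - X s \<omega>)) A =
      emeasure (measure_pmf (map_pmf last (path_pmf (\<lambda>j. x (s + j)) p 0))) A"
      by (simp add: emeasure_distr indicator_def emeasure_space_1 zero_prod_def)
  qed
next
  case (Suc n)
  let ?S = "\<lambda>\<omega>. X (s + n) \<omega> - X s \<omega>"
  let ?D = "\<lambda>\<omega>. X (Suc (s + n)) \<omega> - X (s + n) \<omega>"
  let ?P = "map_pmf last (path_pmf (\<lambda>j. x (s + j)) p n)"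
  let ?Q = "step_pmf p (x (Suc (s + n)) - x (s + n))"
  have Seq: "?S = (\<lambda>\<omega>. (\<lambda>f. \<Sum>i\<in>{s<..s+n}. f i) (V {s<..s+n} \<omega>))"
    by (auto simp: X_diff V_def fun_eq_iff intro!: sum.cong)
  have Deq: "?D = (\<lambda>\<omega>. (\<lambda>f. f (Suc (s+n))) (V {Suc (s+n)} \<omega>))"
    by (auto simp: V_def Y_def fun_eq_iff)
  have ind: "indep_var (count_space UNIV) ?S (count_space UNIV) ?D"
    unfolding Seq Deq by (rule indep_fun) auto
  then have "distr M (count_space UNIV) ?S \<Otimes>\<^sub>M distr M (count_space UNIV) ?D =
      distr M (count_space UNIV \<Otimes>\<^sub>M count_space UNIV) (\<lambda>\<omega>. (?S \<omega>, ?D \<omega>))"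
    by (simp add: indep_var_distribution_eq)
  then have pd: "distr M (count_space UNIV \<Otimes>\<^sub>M count_space UNIV) (\<lambda>\<omega>. (?S \<omega>, ?D \<omega>)) =
      measure_pmf (pair_pmf ?P ?Q)"
    using Suc.IH stepdistr[of "s+n"] by (simp add: pmf_pair_measure)
  have addm: "(\<lambda>(a, b). a + b) \<in> measurable (count_space UNIV \<Otimes>\<^sub>M count_space UNIV) (count_space (UNIV :: (int \<times> int) set))"
    by (subst pair_measure_countable) auto
  have "distr M (count_space UNIV) (\<lambda>\<omega>. X (s + Suc n) \<omega> - X s \<omega>) =
        distr M (count_space UNIV) ((\<lambda>(a, b). a + b) \<circ> (\<lambda>\<omega>. (?S \<omega>, ?D \<omega>)))"
    by (simp add: comp_def)
  also have "\<dots> = distr (distr M (count_space UNIV \<Otimes>\<^sub>M count_space UNIV) (\<lambda>\<omega>. (?S \<omega>, ?D \<omega>)))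
        (count_space UNIV) (\<lambda>(a, b). a + b)"
    by (rule distr_distr[symmetric, OF addm]) simp
  also have "\<dots> = measure_pmf (map_pmf (\<lambda>(a, b). a + b) (pair_pmf ?P ?Q))"
    by (simp add: pd map_pmf_rep_eq)
  also have "\<dots> = measure_pmf (map_pmf last (path_pmf (\<lambda>j. x (s + j)) p (Suc n)))"
    by (subst path_last_Suc) simp
  finally show ?case .
qed


lemma D_eq_path:
  assumes "k \<le> n"
  shows "prob {\<omega> \<in> space M. X (s + k) \<omega> - X s \<omega> = 0} =
         measure_pmf.prob (path_pmf (\<lambda>j. x (s + j)) p n) {xs. xs ! k = (0,0)}"
proof -
  have "prob {\<omega> \<in> space M. X (s + k) \<omega> - X s \<omega> = 0} =
        measure (distr M (count_space UNIV) (\<lambda>\<omega>. X (s + k) \<omega> - X s \<omega>)) {0}"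
    by (subst measure_distr) (auto intro!: arg_cong[where f=prob])
  also have "\<dots> = measure_pmf.prob (map_pmf last (path_pmf (\<lambda>j. x (s + j)) p k)) {0}"
    by (simp only: distr_diff)
  also have "\<dots> = measure_pmf.prob (map_pmf (\<lambda>xs. xs ! k) (path_pmf (\<lambda>j. x (s + j)) p n)) {0}"
    by (simp only: path_nth[OF assms])
  also have "\<dots> = measure_pmf.prob (path_pmf (\<lambda>j. x (s + j)) p n) {xs. xs ! k = (0,0)}"
    by (simp add: vimage_def zero_prod_def)
  finally show ?thesis .
qed

lemma shift_instr: "is_instructions (\<lambda>j. x (s + j))"
proof -
  have "is_instructions x" using gwalk by (simp add: guided_walk_def)
  then show ?thesis unfolding is_instructions_def
    by (metis add_Suc_right)
qed

end

lemma R_ge_1: "1 \<le> R \<tau> p"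
  unfolding R_def
proof (rule cInf_greatest)
  let ?x0 = "\<lambda>t::nat. (int t, 0::int)"
  have "is_instructions ?x0" by (simp add: is_instructions_def unit_steps_def)
  then show "{measure_pmf.expectation (path_pmf x p \<tau>)
            (\<lambda>xs. real (card {t \<in> {0..\<tau>}. xs ! t = (0, 0)})) | x. is_instructions x} \<noteq> {}"
    by blast
next
  fix c assume "c \<in> {measure_pmf.expectation (path_pmf x p \<tau>)
            (\<lambda>xs. real (card {t \<in> {0..\<tau>}. xs ! t = (0, 0)})) | x. is_instructions x}"
  then obtain x where c: "c = measure_pmf.expectation (path_pmf x p \<tau>)
            (\<lambda>xs. real (card {t \<in> {0..\<tau>}. xs ! t = (0, 0)}))" by blast
  have "c = (\<Sum>t\<in>{0..\<tau>}. measure_pmf.prob (path_pmf x p \<tau>) {xs. xs ! t = (0,0)})"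
    using c expect_count[of "{0..\<tau>}" "path_pmf x p \<tau>"] by simp
  moreover have "measure_pmf.prob (path_pmf x p \<tau>) {xs. xs ! 0 = (0,0)} = 1"
  proof -
    have "measure_pmf.prob (path_pmf x p \<tau>) {xs. xs ! 0 = (0,0)} =
          measure_pmf.prob (map_pmf (\<lambda>xs. xs ! 0) (path_pmf x p \<tau>)) {(0,0)}"
      by (simp add: vimage_def)
    also have "\<dots> = 1" by (simp only: path_nth[of 0 \<tau>]) simp
    finally show ?thesis .
  qed
  moreover have "measure_pmf.prob (path_pmf x p \<tau>) {xs. xs ! 0 = (0,0)} \<le>
      (\<Sum>t\<in>{0..\<tau>}. measure_pmf.prob (path_pmf x p \<tau>) {xs. xs ! t = (0,0)})"
    by (rule member_le_sum) auto
  ultimately show "1 \<le> c" by simp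
qed

lemma R_le:
  assumes "is_instructions x"
  shows "R \<tau> p \<le> measure_pmf.expectation (path_pmf x p \<tau>) (\<lambda>xs. real (card {t \<in> {0..\<tau>}. xs ! t = (0, 0)}))"
  unfolding R_def
proof (rule cInf_lower)
  show "measure_pmf.expectation (path_pmf x p \<tau>) (\<lambda>xs. real (card {t \<in> {0..\<tau>}. xs ! t = (0, 0)}))
    \<in> {measure_pmf.expectation (path_pmf x p \<tau>)
            (\<lambda>xs. real (card {t \<in> {0..\<tau>}. xs ! t = (0, 0)})) | x. is_instructions x}"
    using assms by blast
  show "bdd_below {measure_pmf.expectation (path_pmf x p \<tau>)
            (\<lambda>xs. real (card {t \<in> {0..\<tau>}. xs ! t = (0, 0)})) | x. is_instructions x}"
    by (rule bdd_belowI[where m=0]) auto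
qed


context gw begin

lemma c_ge:
  "R \<tau> p \<le> (\<Sum>k\<in>{0..\<tau>}. prob {\<omega> \<in> space M. X (s + k) \<omega> - X s \<omega> = 0})"
proof -
  have "(\<Sum>k\<in>{0..\<tau>}. prob {\<omega> \<in> space M. X (s + k) \<omega> - X s \<omega> = 0}) =
        (\<Sum>k\<in>{0..\<tau>}. measure_pmf.prob (path_pmf (\<lambda>j. x (s + j)) p \<tau>) {xs. xs ! k = (0,0)})"
    by (intro sum.cong refl D_eq_path) auto
  also have "\<dots> = measure_pmf.expectation (path_pmf (\<lambda>j. x (s + j)) p \<tau>)
      (\<lambda>xs. real (card {t \<in> {0..\<tau>}. xs ! t = (0, 0)}))"
    by (rule expect_count[symmetric]) simp
  finally show ?thesis using R_le[OF shift_instr[of s], where p=p and \<tau>=\<tau>] by simp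
qed

lemma sumV: "t \<le> s \<Longrightarrow> (\<Sum>i\<in>{..t}. V {..s} \<omega> i) = X t \<omega>"
  by (simp add: X_sum V_def)

lemma sumV2: "(\<Sum>i\<in>{s<..s+k}. V {s<..s+k} \<omega> i) = X (s + k) \<omega> - X s \<omega>"
  by (simp add: X_diff V_def)

lemma indep_AE:
  "prob {\<omega> \<in> space M. (X s \<omega> = z \<and> (\<forall>t\<in>{t1..<s}. X t \<omega> \<noteq> z)) \<and> X (s + k) \<omega> = z} =
   prob {\<omega> \<in> space M. X s \<omega> = z \<and> (\<forall>t\<in>{t1..<s}. X t \<omega> \<noteq> z)} *
   prob {\<omega> \<in> space M. X (s + k) \<omega> - X s \<omega> = 0}"
proof -
  define Pf where "Pf f = ((\<Sum>i\<in>{..s}. f i) = z \<and> (\<forall>t\<in>{t1..<s}. (\<Sum>i\<in>{..t}. f i) \<noteq> z))" for f :: "nat \<Rightarrow> int \<times> int"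
  define Qf where "Qf f = ((\<Sum>i\<in>{s<..s+k}. f i) = 0)" for f :: "nat \<Rightarrow> int \<times> int"
  have P: "Pf (V {..s} \<omega>) \<longleftrightarrow> (X s \<omega> = z \<and> (\<forall>t\<in>{t1..<s}. X t \<omega> \<noteq> z))" for \<omega>
    unfolding Pf_def by (auto simp: sumV)
  have Q: "Qf (V {s<..s+k} \<omega>) \<longleftrightarrow> X (s + k) \<omega> - X s \<omega> = 0" for \<omega>
    unfolding Qf_def by (simp add: sumV2)
  have e1: "{\<omega> \<in> space M. (X s \<omega> = z \<and> (\<forall>t\<in>{t1..<s}. X t \<omega> \<noteq> z)) \<and> X (s + k) \<omega> = z} =
        {\<omega> \<in> space M. Pf (V {..s} \<omega>) \<and> Qf (V {s<..s+k} \<omega>)}"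
    by (auto simp: P Q)
  have e2: "{\<omega> \<in> space M. X s \<omega> = z \<and> (\<forall>t\<in>{t1..<s}. X t \<omega> \<noteq> z)} = {\<omega> \<in> space M. Pf (V {..s} \<omega>)}"
    by (auto simp: P)
  have e3: "{\<omega> \<in> space M. X (s + k) \<omega> - X s \<omega> = 0} = {\<omega> \<in> space M. Qf (V {s<..s+k} \<omega>)}"
    by (auto simp: Q)
  have disj: "{..s} \<inter> {s<..s+k} = {}" by auto
  show ?thesis
    by (simp only: e1 e2 e3 prob_indep[OF disj finite_atMost finite_greaterThanAtMost])
qed

end


context gw begin

lemma main:
  assumes "t1 \<le> t2"
  shows "prob {\<omega> \<in> space M. \<exists>t \<in> {t1..t2}. X t \<omega> = z} * R \<tau> p
           \<le> (\<integral>\<omega>. real (card {t \<in> {t1..t2 + \<tau>}. X t \<omega> = z}) \<partial>M)"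
proof -
  define E where "E t = {\<omega> \<in> space M. X t \<omega> = z}" for t
  define A where "A s = {\<omega> \<in> space M. X s \<omega> = z \<and> (\<forall>t\<in>{t1..<s}. X t \<omega> \<noteq> z)}" for s
  define H where "H = {\<omega> \<in> space M. \<exists>t \<in> {t1..t2}. X t \<omega> = z}"
  define R0 where "R0 = R \<tau> p"
  have R0: "1 \<le> R0" unfolding R0_def by (rule R_ge_1)
  have Em[measurable]: "E t \<in> sets M" for t
    unfolding E_def by measurable
  have Am[measurable]: "A s \<in> sets M" for s
    unfolding A_def by measurable
  have HA: "H \<subseteq> (\<Union>s\<in>{t1..t2}. A s)"
  proof
    fix \<omega> assume "\<omega> \<in> H"
    then obtain t where t: "\<omega> \<in> space M" "t \<in> {t1..t2}" "X t \<omega> = z" unfolding H_def by auto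
    define s where "s = (LEAST t. t \<in> {t1..t2} \<and> X t \<omega> = z)"
    have s: "s \<in> {t1..t2} \<and> X s \<omega> = z" unfolding s_def by (rule LeastI[of _ t]) (use t in auto)
    have "\<forall>t'\<in>{t1..<s}. X t' \<omega> \<noteq> z"
    proof (intro ballI notI)
      fix t' assume "t' \<in> {t1..<s}" "X t' \<omega> = z"
      moreover have "t' \<le> t2" using s \<open>t' \<in> {t1..<s}\<close> by auto
      ultimately have "s \<le> t'" unfolding s_def by (intro Least_le) auto
      then show False using \<open>t' \<in> {t1..<s}\<close> by simp
    qed
    then show "\<omega> \<in> (\<Union>s\<in>{t1..t2}. A s)" using s t unfolding A_def by auto
  qed
  have "prob H \<le> prob (\<Union>s\<in>{t1..t2}. A s)"
    by (rule finite_measure_mono[OF HA]) auto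
  also have "\<dots> \<le> (\<Sum>s\<in>{t1..t2}. prob (A s))"
    by (rule finite_measure_subadditive_finite) auto
  finally have PH: "prob H \<le> (\<Sum>s\<in>{t1..t2}. prob (A s))" .
  define F where "F \<omega> = (\<Sum>s\<in>{t1..t2}. \<Sum>k\<in>{0..\<tau>}. indicator (A s \<inter> E (s + k)) \<omega> :: real)" for \<omega> :: 'w
  define C where "C \<omega> = (\<Sum>t\<in>{t1..t2+\<tau>}. indicator (E t) \<omega> :: real)" for \<omega> :: 'w
  have intF: "integrable M F" unfolding F_def by (intro Bochner_Integration.integrable_sum integrable_real_indicator) (auto simp: emeasure_eq_measure)
  have intC: "integrable M C" unfolding C_def by (intro Bochner_Integration.integrable_sum integrable_real_indicator) (auto simp: emeasure_eq_measure)
  have Cnn: "0 \<le> C \<omega>" for \<omega> unfolding C_def by (intro sum_nonneg) auto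
  have FC: "F \<omega> \<le> C \<omega>" if "\<omega> \<in> space M" for \<omega>
  proof (cases "\<exists>s0\<in>{t1..t2}. \<omega> \<in> A s0")
    case False
    then have "F \<omega> = 0" unfolding F_def by (intro sum.neutral ballI) auto
    then show ?thesis using Cnn by simp
  next
    case True
    then obtain s0 where s0: "s0 \<in> {t1..t2}" "\<omega> \<in> A s0" by blast
    have notA: "\<omega> \<notin> A s" if "s \<in> {t1..t2}" "s \<noteq> s0" for s
    proof
      assume "\<omega> \<in> A s"
      show False
      proof (cases "s < s0")
        case True
        then show False using \<open>\<omega> \<in> A s\<close> s0 that unfolding A_def by auto
      next
        case False
        then have "s0 < s" using that by simp
        then show False using \<open>\<omega> \<in> A s\<close> s0 that unfolding A_def by auto
      qed
    qed
    have "F \<omega> = (\<Sum>k\<in>{0..\<tau>}. indicator (A s0 \<inter> E (s0 + k)) \<omega>)"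
      unfolding F_def
    proof -
      have "(\<Sum>s\<in>{t1..t2} - {s0}. \<Sum>k = 0..\<tau>. indicator (A s \<inter> E (s + k)) \<omega> :: real) = 0"
        using notA by (auto intro!: sum.neutral)
      then show "(\<Sum>s\<in>{t1..t2}. \<Sum>k = 0..\<tau>. indicator (A s \<inter> E (s + k)) \<omega> :: real) =
         (\<Sum>k = 0..\<tau>. indicator (A s0 \<inter> E (s0 + k)) \<omega>)"
        using sum.remove[of "{t1..t2}" s0 "\<lambda>s. \<Sum>k = 0..\<tau>. indicator (A s \<inter> E (s + k)) \<omega> :: real"] s0
        by simp
    qed
    also have "\<dots> \<le> (\<Sum>k\<in>{0..\<tau>}. indicator (E (s0 + k)) \<omega>)"
      by (intro sum_mono) (auto simp: indicator_def)
    also have "\<dots> = (\<Sum>t\<in>(\<lambda>k. s0 + k) ` {0..\<tau>}. indicator (E t) \<omega>)"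
      by (subst sum.reindex) (auto simp: inj_on_def)
    also have "\<dots> \<le> C \<omega>"
      unfolding C_def using s0 by (intro sum_mono2) auto
    finally show ?thesis .
  qed
  have CC: "C \<omega> = real (card {t \<in> {t1..t2 + \<tau>}. X t \<omega> = z})" if "\<omega> \<in> space M" for \<omega>
    unfolding C_def E_def using that by (simp add: indicator_def sum.If_cases Int_def)
  have "integral\<^sup>L M F = (\<Sum>s\<in>{t1..t2}. \<Sum>k\<in>{0..\<tau>}. prob (A s \<inter> E (s + k)))"
    unfolding F_def
    apply (subst Bochner_Integration.integral_sum)
     apply (intro Bochner_Integration.integrable_sum integrable_real_indicator; simp add: emeasure_eq_measure)
    apply (intro sum.cong refl)
    apply (subst Bochner_Integration.integral_sum)
     apply (intro integrable_real_indicator; simp add: emeasure_eq_measure)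
    apply (intro sum.cong refl)
    apply (simp add: Int_absorb2 sets.sets_into_space Em Am)
    done
  also have "\<dots> = (\<Sum>s\<in>{t1..t2}. prob (A s) * (\<Sum>k\<in>{0..\<tau>}. prob {\<omega> \<in> space M. X (s + k) \<omega> - X s \<omega> = 0}))"
    unfolding sum_distrib_left
  proof (intro sum.cong refl)
    fix s k
    have "A s \<inter> E (s + k) = {\<omega> \<in> space M. (X s \<omega> = z \<and> (\<forall>t\<in>{t1..<s}. X t \<omega> \<noteq> z)) \<and> X (s + k) \<omega> = z}"
      unfolding A_def E_def by auto
    then show "prob (A s \<inter> E (s + k)) = prob (A s) * prob {\<omega> \<in> space M. X (s + k) \<omega> - X s \<omega> = 0}"
      using indep_AE[of s z t1 k] unfolding A_def by simp
  qed
  also have "\<dots> \<ge> (\<Sum>s\<in>{t1..t2}. prob (A s) * R0)"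
    unfolding R0_def by (intro sum_mono mult_left_mono c_ge) auto
  finally have "(\<Sum>s\<in>{t1..t2}. prob (A s)) * R0 \<le> integral\<^sup>L M F"
    by (simp add: sum_distrib_right)
  moreover have "prob H * R0 \<le> (\<Sum>s\<in>{t1..t2}. prob (A s)) * R0"
    using PH R0 by (intro mult_right_mono) auto
  moreover have "integral\<^sup>L M F \<le> integral\<^sup>L M C"
    by (rule integral_mono[OF intF intC FC])
  moreover have "integral\<^sup>L M C = (\<integral>\<omega>. real (card {t \<in> {t1..t2 + \<tau>}. X t \<omega> = z}) \<partial>M)"
    by (rule Bochner_Integration.integral_cong[OF refl CC])
  ultimately show ?thesis unfolding H_def R0_def by linarith
qed

end


theorem proposition2:
  fixes M :: "'w measure" and p :: real and \<tau> t1 t2 :: nat and z :: "int \<times> int"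
    and x :: "nat \<Rightarrow> int \<times> int" and X :: "nat \<Rightarrow> 'w \<Rightarrow> int \<times> int"
  assumes "0 < \<tau>" and "0 \<le> p" and "p \<le> 1" and "t1 \<le> t2"
    and "guided_walk M p x X"
  shows "measure M {\<omega> \<in> space M. \<exists>t \<in> {t1..t2}. X t \<omega> = z}
           \<le> (\<integral>\<omega>. real (card {t \<in> {t1..t2 + \<tau>}. X t \<omega> = z}) \<partial>M) / R \<tau> p"
proof -
  interpret gw M p x X by standard fact
  have R: "0 < R \<tau> p" using R_ge_1[of \<tau> p] by simp
  show ?thesis
    using main[OF assms(4), of z \<tau>] R by (simp add: pos_le_divide_eq)
qed

end
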